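(* Fix a state $s$, let $\gamma\in(0,1)$, and let $F_j^{N,\infty}=\sum_{i\le j}p_i^{N,\infty}$ and $F_j^{N,k}=\sum_{i\le j}p_i^{N,k}$ be the cumulative weights of $\eta_{N,\infty}^s=\sum_ip_i^{N,\infty}\delta_{z_i}$ and $\eta_{N,k}^s=\sum_ip_i^{N,k}\delta_{z_i}$ (with $F_0=0$). Let $u\in(0,1)$ and suppose there is $j\in\{1,\dots,N\}$ with $F_{j-1}^{N,\infty}<u<F_j^{N,\infty}$; set $\epsilon_u:=\min\{F_j^{N,\infty}-u,\ u-F_{j-1}^{N,\infty}\}$. If $k\ge\kappa N$ with $$\kappa>\frac{\log\!\big(\frac{N\delta_0}{\epsilon_u^2(z_{\max}-z_{\min})}\big)}{N\log(1/\gamma)},$$ then $F_{j-1}^{N,k}<u<F_j^{N,k}$, i.e. $z_j$ is also the corresponding quantile of $\eta_{N,k}^s$.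
   Context: Finite MDP with deterministic costs, discount $\gamma$, fixed policy $\pi$. Grid $z_i=z_{\min}+(i-1)\frac{z_{\max}-z_{\min}}{N-1}$, $N\ge2$. Projection $\Pi_{\mathcal C}$ onto grid distributions: $\Pi_{\mathcal C}\delta_y=\delta_{z_1}$ if $y\le z_1$, $=\delta_{z_N}$ if $y>z_N$, $=\frac{z_{i+1}-y}{z_{i+1}-z_i}\delta_{z_i}+\frac{y-z_i}{z_{i+1}-z_i}\delta_{z_{i+1}}$ if $z_i<y\le z_{i+1}$, extended linearly. Projected Bellman operator $(\Pi_{\mathcal C}\mathcal T^\pi\eta)^{(s,a)}=\Pi_{\mathcal C}\big[\sum_{s'}P(s'\mid s,a)\sum_{a'}\pi(a'\mid s')(b_{C(s,a),\gamma})_\#\eta^{(s',a')}\big]$ with $b_{c,\gamma}(z)=c+\gamma z$; $\eta_{N,\infty}$ is its unique fixed point, $\eta_{N,k}=(\Pi_{\mathcal C}\mathcal T^\pi)^k\eta_{N,0}$ for an initial family $\eta_{N,0}$ of grid distributions, and state laws are mixtures $\eta^s=\sum_a\pi(a\mid s)\eta^{(s,a)}$. $\delta_0:=\sup_{(s,a)}l_2^2(\eta_{N,0}^{(s,a)},\eta_{N,\infty}^{(s,a)})$ with Cramér distance $l_2(\nu_1,\nu_2)=(\int(F_{\nu_1}-F_{\nu_2})^2dx)^{1/2}$. It is known that $\Pi_{\mathcal C}\mathcal T^\pi$ is a $\sqrt\gamma$-contraction in $\bar l_2(\eta,\nu)=\sup_{(s,a)}l_2(\eta^{(s,a)},\nu^{(s,a)})$.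 *)

theory Defs
  imports "HOL-Analysis.Analysis"
begin

text \<open>Grid distributions on z_1,...,z_N are represented by their weight vectors
  p :: nat => real (only indices 1..N are meaningful).\<close>

definition grid :: "real \<Rightarrow> real \<Rightarrow> nat \<Rightarrow> nat \<Rightarrow> real" where
  "grid zmin zmax N i = zmin + (real i - 1) * (zmax - zmin) / (real N - 1)"

definition is_gdist :: "nat \<Rightarrow> (nat \<Rightarrow> real) \<Rightarrow> bool" where
  "is_gdist N p \<longleftrightarrow> (\<forall>i\<in>{1..N}. 0 \<le> p i) \<and> (\<Sum>i=1..N. p i) = 1"

text \<open>Weight that the projection of the Dirac mass at y puts on the grid point z_i.\<close>
definition proj_w :: "(nat \<Rightarrow> real) \<Rightarrow> nat \<Rightarrow> real \<Rightarrow> nat \<Rightarrow> real" where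
  "proj_w z N y i =
     (if y \<le> z 1 then (if i = 1 then 1 else 0)
      else if y > z N then (if i = N then 1 else 0)
      else (\<Sum>l\<in>{1..<N}. if z l < y \<and> y \<le> z (Suc l) then
              (if i = l then (z (Suc l) - y) / (z (Suc l) - z l)
               else if i = Suc l then (y - z l) / (z (Suc l) - z l) else 0)
            else 0))"

text \<open>Projected distributional Bellman operator, acting on families of grid
  distributions indexed by state-action pairs. P s a s' = P(s'|s,a), pol s a = pi(a|s).\<close>
definition proj_bellman ::
  "(nat \<Rightarrow> real) \<Rightarrow> nat \<Rightarrow> ('s \<Rightarrow> 'a \<Rightarrow> real) \<Rightarrow> ('s \<Rightarrow> 'a \<Rightarrow> 's \<Rightarrow> real) \<Rightarrow>
   ('s \<Rightarrow> 'a \<Rightarrow> real) \<Rightarrow> real \<Rightarrow> ('s \<times> 'a \<Rightarrow> nat \<Rightarrow> real) \<Rightarrow> ('s::finite \<times> 'a::finite \<Rightarrow> nat \<Rightarrow> real)"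
  where
  "proj_bellman z N C P pol \<gamma> \<eta> = (\<lambda>(s, a) i.
     \<Sum>s'\<in>UNIV. P s a s' * (\<Sum>a'\<in>UNIV. pol s' a' *
        (\<Sum>l\<in>{1..N}. \<eta> (s', a') l * proj_w z N (C s a + \<gamma> * z l) i)))"

definition gcdf :: "(nat \<Rightarrow> real) \<Rightarrow> nat \<Rightarrow> (nat \<Rightarrow> real) \<Rightarrow> real \<Rightarrow> real" where
  "gcdf z N p x = (\<Sum>i\<in>{1..N}. if z i \<le> x then p i else 0)"

definition cramer_sq :: "(nat \<Rightarrow> real) \<Rightarrow> nat \<Rightarrow> (nat \<Rightarrow> real) \<Rightarrow> (nat \<Rightarrow> real) \<Rightarrow> real" where
  "cramer_sq z N p q = integral\<^sup>L lborel (\<lambda>x. (gcdf z N p x - gcdf z N q x)\<^sup>2)"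

definition state_law :: "('s \<Rightarrow> 'a \<Rightarrow> real) \<Rightarrow> ('s \<times> 'a::finite \<Rightarrow> nat \<Rightarrow> real) \<Rightarrow> 's \<Rightarrow> nat \<Rightarrow> real" where
  "state_law pol \<eta> s i = (\<Sum>a\<in>UNIV. pol s a * \<eta> (s, a) i)"

definition cum :: "(nat \<Rightarrow> real) \<Rightarrow> nat \<Rightarrow> real" where
  "cum p j = (\<Sum>i\<in>{1..j}. p i)"

end

theory Submission
  imports Defs
begin


lemma CS_weighted:
  fixes a g :: "'x \<Rightarrow> real"
  assumes "\<And>x. x \<in> A \<Longrightarrow> a x \<ge> 0"
  shows "(\<Sum>x\<in>A. a x * g x)\<^sup>2 \<le> (\<Sum>x\<in>A. a x) * (\<Sum>x\<in>A. a x * (g x)\<^sup>2)"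
proof -
  have "(\<Sum>x\<in>A. a x * g x) = (\<Sum>x\<in>A. sqrt (a x) * (sqrt (a x) * g x))"
    by (rule sum.cong) (auto simp: assms real_sqrt_mult_self mult.assoc[symmetric])
  also have "(\<dots>)\<^sup>2 \<le> (\<Sum>x\<in>A. (sqrt (a x))\<^sup>2) * (\<Sum>x\<in>A. (sqrt (a x) * g x)\<^sup>2)"
    by (rule Cauchy_Schwarz_ineq_sum)
  also have "\<dots> = (\<Sum>x\<in>A. a x) * (\<Sum>x\<in>A. a x * (g x)\<^sup>2)"
    using assms by (simp add: power_mult_distrib)
  finally show ?thesis .
qed

lemma sum_single:
  assumes "finite A" "a \<in> A" "\<And>x. x \<in> A \<Longrightarrow> x \<noteq> a \<Longrightarrow> f x = 0"
  shows "sum f A = f a"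
proof -
  have "sum f A = f a + sum f (A - {a})" using assms by (simp add: sum.remove)
  also have "sum f (A - {a}) = 0" using assms by (intro sum.neutral) auto
  finally show ?thesis by simp
qed

definition clamp :: "real \<Rightarrow> real" where "clamp x = max 0 (min 1 x)"

lemma clamp_sum: "(\<Sum>i=1..n. clamp (real i - t)) = max 0 (min (real n) (real n - t))"
proof (induction n)
  case 0 then show ?case by simp
next
  case (Suc n)
  then show ?case by (simp add: clamp_def)
qed

locale gs =
  fixes zmin zmax :: real and N :: nat
  assumes N2: "N \<ge> 2" and zr: "zmin < zmax"
begin

definition "dz = (zmax - zmin) / (real N - 1)"
abbreviation "z \<equiv> grid zmin zmax N"

lemma dz_pos: "dz > 0" using N2 zr by (simp add: dz_def)

lemma z_eq: "z m = zmin + (real m - 1) * dz"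
  by (simp add: grid_def dz_def)

lemma z_le_iff: "z m \<le> z m' \<longleftrightarrow> m \<le> m'"
  using dz_pos by (simp add: z_eq)
lemma z_less_iff: "z m < z m' \<longleftrightarrow> m < m'"
  using dz_pos by (simp add: z_eq)
lemma z_Suc: "z (Suc m) = z m + dz"
  by (simp add: z_eq algebra_simps)
lemma z1: "z 1 = zmin" by (simp add: z_eq)
lemma zN: "z N = zmax" using N2 zr by (simp add: grid_def)
lemma dz_N: "(real N - 1) * dz = zmax - zmin" using N2 by (simp add: dz_def)

definition hW :: "real \<Rightarrow> nat \<Rightarrow> real" where
  "hW y m = (if m = 0 then 0 else if m \<ge> N then 1 else clamp ((z (Suc m) - y) / dz))"

lemma hW_low: "y \<le> z 1 \<Longrightarrow> hW y m = (if m = 0 then 0 else 1)"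
proof -
  assume y: "y \<le> z 1"
  { assume m: "m \<ge> 1" "m < N"
    have "z (Suc m) \<ge> z 2" using m by (simp add: z_le_iff)
    moreover have "z 2 = z 1 + dz" using z_Suc[of 1] by (simp add: numeral_2_eq_2)
    ultimately have "(z (Suc m) - y) / dz \<ge> 1" using y dz_pos by (simp add: field_simps)
    hence "clamp ((z (Suc m) - y) / dz) = 1" by (simp add: clamp_def) }
  thus ?thesis by (auto simp: hW_def)
qed

lemma hW_high: "y > z N \<Longrightarrow> hW y m = (if m \<ge> N then 1 else 0)"
proof -
  assume y: "y > z N"
  { assume m: "m \<ge> 1" "m < N"
    have "z (Suc m) \<le> z N" using m by (simp add: z_le_iff)
    hence "(z (Suc m) - y) / dz \<le> 0" using y dz_pos by (simp add: divide_nonpos_pos)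
    hence "clamp ((z (Suc m) - y) / dz) = 0" by (simp add: clamp_def) }
  thus ?thesis using N2 by (auto simp: hW_def)
qed

lemma hW_cell:
  assumes l: "1 \<le> l" "l < N" and y: "z l < y" "y \<le> z (Suc l)"
  shows "hW y m = (if m = 0 then 0 else if m < l then 0 else if m = l then (z (Suc l) - y) / dz else 1)"
proof -
  have A: "clamp ((z (Suc m) - y) / dz) = 0" if "Suc m \<le> l" for m
  proof -
    have "z (Suc m) \<le> z l" using that by (simp add: z_le_iff)
    hence "(z (Suc m) - y) / dz \<le> 0" using y dz_pos by (simp add: divide_nonpos_pos)
    thus ?thesis by (simp add: clamp_def)
  qed
  have B: "clamp ((z (Suc m) - y) / dz) = 1" if "m \<ge> Suc l" for m
  proof -
    have "z (Suc m) \<ge> z (Suc (Suc l))" using that by (simp add: z_le_iff)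
    hence "(z (Suc m) - y) / dz \<ge> 1" using y dz_pos z_Suc[of "Suc l"] by (simp add: field_simps)
    thus ?thesis by (simp add: clamp_def)
  qed
  have C: "clamp ((z (Suc l) - y) / dz) = (z (Suc l) - y) / dz"
  proof -
    have "(z (Suc l) - y) / dz \<ge> 0" using y dz_pos by simp
    moreover have "(z (Suc l) - y) / dz \<le> 1" using y dz_pos z_Suc[of l] by (simp add: field_simps)
    ultimately show ?thesis by (simp add: clamp_def)
  qed
  show ?thesis
    using l A B C by (auto simp: hW_def)
qed

lemma proj_w_eq:
  assumes m: "m \<in> {1..N}"
  shows "proj_w z N y m = hW y m - hW y (m - 1)"
proof (cases "y \<le> z 1")
  case True
  then show ?thesis using m by (simp add: proj_w_def hW_low)
next
  case F1: False
  show ?thesis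
  proof (cases "y > z N")
    case True
    then show ?thesis using m F1 N2 by (auto simp: proj_w_def hW_high)
  next
    case F2: False
    define S where "S = {i\<in>{1..N}. z i < y}"
    have finS: "finite S" by (simp add: S_def)
    have "1 \<in> S" using F1 N2 by (simp add: S_def)
    hence neS: "S \<noteq> {}" by auto
    define l where "l = Max S"
    have lS: "l \<in> S" using finS neS by (simp add: l_def)
    have l1: "1 \<le> l" "l \<le> N" "z l < y" using lS by (auto simp: S_def)
    have lN: "l < N" using l1 F2 by (cases "l = N") auto
    have ySuc: "y \<le> z (Suc l)"
    proof (rule ccontr)
      assume "\<not> y \<le> z (Suc l)"
      hence "Suc l \<in> S" using lN by (simp add: S_def)
      hence "Suc l \<le> l" using finS by (simp add: l_def)
      thus False by simp
    qed
    have dz': "z (Suc l) - z l = dz" by (simp add: z_Suc)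
    let ?f = "\<lambda>l'. if z l' < y \<and> y \<le> z (Suc l') then
              (if m = l' then (z (Suc l') - y) / (z (Suc l') - z l')
               else if m = Suc l' then (y - z l') / (z (Suc l') - z l') else 0)
            else (0::real)"
    have "(\<Sum>l'\<in>{1..<N}. ?f l') = ?f l"
    proof (rule sum_single)
      show "l \<in> {1..<N}" using l1 lN by simp
      fix l' assume "l' \<in> {1..<N}" "l' \<noteq> l"
      show "?f l' = 0"
      proof (cases "l' < l")
        case True
        hence "z (Suc l') \<le> z l" by (simp add: z_le_iff)
        then show ?thesis using l1 by auto
      next
        case False
        hence "z l' \<ge> z (Suc l)" using \<open>l' \<noteq> l\<close> by (simp add: z_le_iff)
        then show ?thesis using ySuc by auto
      qed
    qed simp
    hence pw: "proj_w z N y m = ?f l" using F1 F2 by (simp add: proj_w_def)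
    show ?thesis
      unfolding pw hW_cell[OF l1(1) lN l1(3) ySuc] using m l1 ySuc dz' dz_pos
      by (auto simp: field_simps)
  qed
qed

lemma W_eq: "i \<le> N \<Longrightarrow> (\<Sum>m=1..i. proj_w z N y m) = hW y i"
proof (induction i)
  case 0 then show ?case by (simp add: hW_def)
next
  case (Suc i)
  then show ?case by (simp add: proj_w_eq)
qed

end


lemma abel: "(\<Sum>l=1..n. e l * w l) = (\<Sum>l=1..n-1. cum e l * (w l - w (Suc l))) + cum e n * w n"
proof (induction n)
  case 0 then show ?case by (simp add: cum_def)
next
  case (Suc n)
  show ?case
  proof (cases n)
    case 0 then show ?thesis by (simp add: cum_def)
  next
    case (Suc m)
    have "(\<Sum>l=1..Suc n - 1. cum e l * (w l - w (Suc l))) = (\<Sum>l=1..n-1. cum e l * (w l - w (Suc l))) + cum e n * (w n - w (Suc n))"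
      using Suc by simp
    moreover have "cum e (Suc n) = cum e n + e (Suc n)" by (simp add: cum_def)
    ultimately show ?thesis using Suc.IH by (simp add: algebra_simps)
  qed
qed

context gs begin

definition Dv :: "(nat \<Rightarrow> real) \<Rightarrow> real" where "Dv v = (\<Sum>i=1..N-1. (cum v i)\<^sup>2)"

lemma Dv_nonneg: "Dv v \<ge> 0" by (simp add: Dv_def sum_nonneg)

lemma hW_mid: "1 \<le> i \<Longrightarrow> i < N \<Longrightarrow> hW y i = clamp (real i - (y - zmin) / dz)"
proof -
  assume "1 \<le> i" "i < N"
  moreover have "(z (Suc i) - y) / dz = real i - (y - zmin) / dz"
    using dz_pos by (simp add: z_eq field_simps)
  ultimately show ?thesis by (simp add: hW_def)
qed

lemma hW_01: "0 \<le> hW y i \<and> hW y i \<le> 1" by (simp add: hW_def clamp_def)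

lemma contract_single:
  assumes g: "0 \<le> \<gamma>" "\<gamma> \<le> 1" and e: "cum e N = 0"
  shows "(\<Sum>i=1..N-1. (\<Sum>l=1..N. e l * hW (c + \<gamma> * z l) i)\<^sup>2) \<le> \<gamma> * Dv e"
proof -
  define y where "y l = c + \<gamma> * z l" for l
  define a where "a i l = hW (y l) i - hW (y (Suc l)) i" for i l
  define t where "t l = (y l - zmin) / dz" for l
  have tSuc: "t (Suc l) = t l + \<gamma>" for l
    using dz_pos by (simp add: t_def y_def z_Suc field_simps)
  have Q: "(\<Sum>l=1..N. e l * hW (y l) i) = (\<Sum>l=1..N-1. cum e l * a i l)" for i
    using abel[of e "\<lambda>l. hW (y l) i" N] e by (simp add: a_def)
  have aclamp: "a i l = clamp (real i - t l) - clamp (real i - t l - \<gamma>)" if "i \<in> {1..N-1}" for i l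
  proof -
    have i: "1 \<le> i" "i < N" using that N2 by auto
    show ?thesis unfolding a_def hW_mid[OF i] t_def[symmetric] tSuc by (simp add: algebra_simps)
  qed
  have anon: "a i l \<ge> 0" if "i \<in> {1..N-1}" for i l
    using aclamp[OF that] g by (simp add: clamp_def)
  have arow: "(\<Sum>l=1..N-1. a i l) \<le> 1" for i
  proof -
    have "(\<Sum>l=1..N-1. a i l) = (\<Sum>l=1..N-1. (- hW (y (Suc l)) i) - (- hW (y l) i))"
      by (simp add: a_def)
    also have "\<dots> = - hW (y (Suc (N-1))) i - (- hW (y 1) i)"
      by (rule sum_Suc_diff) simp
    finally show ?thesis using hW_01[of "y 1" i] hW_01[of "y (Suc (N-1))" i] by linarith
  qed
  have acol: "(\<Sum>i=1..N-1. a i l) \<le> \<gamma>" for l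
  proof -
    have "(\<Sum>i=1..N-1. a i l) = (\<Sum>i=1..N-1. clamp (real i - t l)) - (\<Sum>i=1..N-1. clamp (real i - (t l + \<gamma>)))"
      by (simp add: aclamp sum_subtractf algebra_simps)
    also have "\<dots> \<le> \<gamma>" unfolding clamp_sum using g by linarith
    finally show ?thesis .
  qed
  have "(\<Sum>i=1..N-1. (\<Sum>l=1..N. e l * hW (c + \<gamma> * z l) i)\<^sup>2)
      = (\<Sum>i=1..N-1. (\<Sum>l=1..N-1. a i l * cum e l)\<^sup>2)"
    using Q by (simp add: y_def mult.commute)
  also have "\<dots> \<le> (\<Sum>i=1..N-1. (\<Sum>l=1..N-1. a i l * (cum e l)\<^sup>2))"
  proof (rule sum_mono)
    fix i assume i: "i \<in> {1..N-1}"
    have "(\<Sum>l=1..N-1. a i l * cum e l)\<^sup>2 \<le> (\<Sum>l=1..N-1. a i l) * (\<Sum>l=1..N-1. a i l * (cum e l)\<^sup>2)"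
      by (rule CS_weighted) (use anon[OF i] in auto)
    also have "\<dots> \<le> 1 * (\<Sum>l=1..N-1. a i l * (cum e l)\<^sup>2)"
      by (rule mult_right_mono[OF arow]) (use anon[OF i] in \<open>auto intro: sum_nonneg\<close>)
    finally show "(\<Sum>l=1..N-1. a i l * cum e l)\<^sup>2 \<le> (\<Sum>l=1..N-1. a i l * (cum e l)\<^sup>2)" by simp
  qed
  also have "\<dots> = (\<Sum>l=1..N-1. (\<Sum>i=1..N-1. a i l) * (cum e l)\<^sup>2)"
    by (subst sum.swap) (simp add: sum_distrib_right)
  also have "\<dots> \<le> (\<Sum>l=1..N-1. \<gamma> * (cum e l)\<^sup>2)"
    by (rule sum_mono, rule mult_right_mono[OF acol]) simp
  also have "\<dots> = \<gamma> * Dv e" by (simp add: Dv_def sum_distrib_left)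
  finally show ?thesis .
qed

end


context gs begin

lemma cum_T:
  fixes C :: "'s::finite \<Rightarrow> 'a::finite \<Rightarrow> real"
  assumes "i \<le> N"
  shows "cum (proj_bellman z N C P pol \<gamma> d (s,a)) i =
    (\<Sum>s'\<in>UNIV. P s a s' * (\<Sum>a'\<in>UNIV. pol s' a' * (\<Sum>l=1..N. d (s',a') l * hW (C s a + \<gamma> * z l) i)))"
proof -
  have "cum (proj_bellman z N C P pol \<gamma> d (s,a)) i =
     (\<Sum>m=1..i. \<Sum>s'\<in>UNIV. P s a s' * (\<Sum>a'\<in>UNIV. pol s' a' *
        (\<Sum>l\<in>{1..N}. d (s', a') l * proj_w z N (C s a + \<gamma> * z l) m)))"
    by (simp add: cum_def proj_bellman_def)
  also have "\<dots> = (\<Sum>s'\<in>UNIV. P s a s' * (\<Sum>a'\<in>UNIV. pol s' a' *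
        (\<Sum>l\<in>{1..N}. d (s', a') l * (\<Sum>m=1..i. proj_w z N (C s a + \<gamma> * z l) m))))"
    by (simp add: sum_distrib_left sum.swap[of _ "{Suc 0..i}"])
  also have "\<dots> = (\<Sum>s'\<in>UNIV. P s a s' * (\<Sum>a'\<in>UNIV. pol s' a' * (\<Sum>l=1..N. d (s',a') l * hW (C s a + \<gamma> * z l) i)))"
    using assms by (simp add: W_eq[OF assms, simplified])
  finally show ?thesis .
qed

lemma T_diff:
  fixes C :: "'s::finite \<Rightarrow> 'a::finite \<Rightarrow> real"
  shows "proj_bellman z N C P pol \<gamma> f sa i - proj_bellman z N C P pol \<gamma> g sa i
     = proj_bellman z N C P pol \<gamma> (\<lambda>sa l. f sa l - g sa l) sa i"
  by (cases sa) (simp add: proj_bellman_def left_diff_distrib right_diff_distrib sum_subtractf)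

lemma contract_family:
  fixes C :: "'s::finite \<Rightarrow> 'a::finite \<Rightarrow> real"
  assumes g: "0 \<le> \<gamma>" "\<gamma> \<le> 1"
    and P_nonneg: "\<And>s a s'. P s a s' \<ge> 0" and P_sum: "\<And>s a. (\<Sum>s'\<in>UNIV. P s a s') = 1"
    and pol_nonneg: "\<And>s a. pol s a \<ge> 0" and pol_sum: "\<And>s. (\<Sum>a\<in>UNIV. pol s a) = 1"
    and d0: "\<And>sa. cum (d sa) N = 0" and dM: "\<And>sa. Dv (d sa) \<le> M"
  shows "cum (proj_bellman z N C P pol \<gamma> d sa) N = 0 \<and> Dv (proj_bellman z N C P pol \<gamma> d sa) \<le> \<gamma> * M"
proof -
  obtain s a where sa: "sa = (s,a)" by (cases sa)
  let ?Q = "\<lambda>s' a' i. (\<Sum>l=1..N. d (s',a') l * hW (C s a + \<gamma> * z l) i)"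
  have "cum (proj_bellman z N C P pol \<gamma> d sa) N = (\<Sum>s'\<in>UNIV. P s a s' * (\<Sum>a'\<in>UNIV. pol s' a' * ?Q s' a' N))"
    unfolding sa by (rule cum_T) simp
  also have "\<dots> = 0"
    using d0 by (simp add: hW_def cum_def)
  finally have c1: "cum (proj_bellman z N C P pol \<gamma> d sa) N = 0" .
  have "Dv (proj_bellman z N C P pol \<gamma> d sa) = (\<Sum>i=1..N-1. (\<Sum>s'\<in>UNIV. P s a s' * (\<Sum>a'\<in>UNIV. pol s' a' * ?Q s' a' i))\<^sup>2)"
    unfolding Dv_def sa by (intro sum.cong refl, subst cum_T) auto
  also have "\<dots> \<le> (\<Sum>i=1..N-1. (\<Sum>s'\<in>UNIV. P s a s' * (\<Sum>a'\<in>UNIV. pol s' a' * (?Q s' a' i)\<^sup>2)))"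
  proof (rule sum_mono)
    fix i
    have "(\<Sum>s'\<in>UNIV. P s a s' * (\<Sum>a'\<in>UNIV. pol s' a' * ?Q s' a' i))\<^sup>2
       \<le> (\<Sum>s'\<in>UNIV. P s a s') * (\<Sum>s'\<in>UNIV. P s a s' * (\<Sum>a'\<in>UNIV. pol s' a' * ?Q s' a' i)\<^sup>2)"
      by (rule CS_weighted) (simp add: P_nonneg)
    also have "\<dots> \<le> (\<Sum>s'\<in>UNIV. P s a s' * (\<Sum>a'\<in>UNIV. pol s' a' * (?Q s' a' i)\<^sup>2))"
      unfolding P_sum mult_1_left
    proof (rule sum_mono, rule mult_left_mono)
      fix s'
      have "(\<Sum>a'\<in>UNIV. pol s' a' * ?Q s' a' i)\<^sup>2 \<le> (\<Sum>a'\<in>UNIV. pol s' a') * (\<Sum>a'\<in>UNIV. pol s' a' * (?Q s' a' i)\<^sup>2)"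
        by (rule CS_weighted) (simp add: pol_nonneg)
      then show "(\<Sum>a'\<in>UNIV. pol s' a' * ?Q s' a' i)\<^sup>2 \<le> (\<Sum>a'\<in>UNIV. pol s' a' * (?Q s' a' i)\<^sup>2)"
        by (simp add: pol_sum)
    qed (simp add: P_nonneg)
    finally show "(\<Sum>s'\<in>UNIV. P s a s' * (\<Sum>a'\<in>UNIV. pol s' a' * ?Q s' a' i))\<^sup>2
       \<le> (\<Sum>s'\<in>UNIV. P s a s' * (\<Sum>a'\<in>UNIV. pol s' a' * (?Q s' a' i)\<^sup>2))" .
  qed
  also have "\<dots> = (\<Sum>s'\<in>UNIV. P s a s' * (\<Sum>a'\<in>UNIV. pol s' a' * (\<Sum>i=1..N-1. (?Q s' a' i)\<^sup>2)))"
    by (simp add: sum_distrib_left sum.swap[of _ "{Suc 0..N - Suc 0}"])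
  also have "\<dots> \<le> (\<Sum>s'\<in>UNIV. P s a s' * (\<Sum>a'\<in>UNIV. pol s' a' * (\<gamma> * M)))"
  proof (rule sum_mono, rule mult_left_mono[OF sum_mono], rule mult_left_mono)
    fix s' a'
    show "(\<Sum>i=1..N-1. (?Q s' a' i)\<^sup>2) \<le> \<gamma> * M"
      using contract_single[OF g d0[of "(s',a')"], of "C s a"] dM[of "(s',a')"] g
      by (meson mult_left_mono order_trans)
  qed (auto simp: P_nonneg pol_nonneg)
  also have "\<dots> = \<gamma> * M" by (simp add: sum_distrib_right[symmetric] pol_sum P_sum)
  finally show ?thesis using c1 by simp
qed

end


context gs begin

lemma gcdf_pt:
  assumes e: "cum e N = 0"
  shows "(gcdf z N e x)\<^sup>2 = (\<Sum>l=1..N-1. indicator {z l..<z (Suc l)} x * (cum e l)\<^sup>2)"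
proof (cases "x < z 1")
  case True
  have g: "gcdf z N e x = 0" unfolding gcdf_def
  proof (intro sum.neutral ballI)
    fix m assume "m \<in> {1..N}"
    hence "z 1 \<le> z m" by (simp add: z_le_iff)
    thus "(if z m \<le> x then e m else 0) = 0" using True by auto
  qed
  have "(\<Sum>l=1..N-1. indicator {z l..<z (Suc l)} x * (cum e l)\<^sup>2) = 0"
  proof (intro sum.neutral ballI)
    fix l assume "l \<in> {1..N-1}"
    hence "z 1 \<le> z l" by (simp add: z_le_iff)
    thus "indicator {z l..<z (Suc l)} x * (cum e l)\<^sup>2 = (0::real)" using True by auto
  qed
  then show ?thesis using g by simp
next
  case F1: False
  show ?thesis
  proof (cases "x \<ge> z N")
    case True
    have g: "gcdf z N e x = cum e N" unfolding gcdf_def cum_def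
    proof (intro sum.cong refl)
      fix m assume "m \<in> {1..N}"
      hence "z m \<le> z N" by (simp add: z_le_iff)
      thus "(if z m \<le> x then e m else 0) = e m" using True by auto
    qed
    have "(\<Sum>l=1..N-1. indicator {z l..<z (Suc l)} x * (cum e l)\<^sup>2) = 0"
    proof (intro sum.neutral ballI)
      fix l assume "l \<in> {1..N-1}"
      hence "z (Suc l) \<le> z N" using N2 by (auto simp: z_le_iff)
      thus "indicator {z l..<z (Suc l)} x * (cum e l)\<^sup>2 = (0::real)" using True by auto
    qed
    then show ?thesis using g e by simp
  next
    case F2: False
    define S where "S = {i\<in>{1..N}. z i \<le> x}"
    have finS: "finite S" by (simp add: S_def)
    have "1 \<in> S" using F1 N2 by (simp add: S_def)
    hence neS: "S \<noteq> {}" by auto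
    define l where "l = Max S"
    have lS: "l \<in> S" using finS neS by (simp add: l_def)
    have l1: "1 \<le> l" "l \<le> N" "z l \<le> x" using lS by (auto simp: S_def)
    have lN: "l < N" using l1 F2 by (cases "l = N") auto
    have xSuc: "x < z (Suc l)"
    proof (rule ccontr)
      assume "\<not> x < z (Suc l)"
      hence "Suc l \<in> S" using lN by (simp add: S_def)
      hence "Suc l \<le> l" using finS by (simp add: l_def)
      thus False by simp
    qed
    have g: "gcdf z N e x = cum e l"
    proof -
      have "gcdf z N e x = sum e {m\<in>{1..N}. z m \<le> x}"
        unfolding gcdf_def by (rule sum.inter_filter[symmetric]) simp
      also have "{m\<in>{1..N}. z m \<le> x} = {1..l}"
      proof (intro set_eqI iffI)
        fix m assume m: "m \<in> {m\<in>{1..N}. z m \<le> x}"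
        have "m \<le> l"
        proof (rule ccontr)
          assume "\<not> m \<le> l"
          hence "z (Suc l) \<le> z m" by (simp add: z_le_iff)
          thus False using m xSuc by auto
        qed
        thus "m \<in> {1..l}" using m by auto
      next
        fix m assume m: "m \<in> {1..l}"
        hence "z m \<le> z l" by (simp add: z_le_iff)
        thus "m \<in> {m\<in>{1..N}. z m \<le> x}" using m l1 by auto
      qed
      finally show ?thesis by (simp add: cum_def)
    qed
    have "(\<Sum>l'=1..N-1. indicator {z l'..<z (Suc l')} x * (cum e l')\<^sup>2) = indicator {z l..<z (Suc l)} x * (cum e l)\<^sup>2"
    proof (rule sum_single)
      show "l \<in> {1..N-1}" using l1 lN by simp
      fix l' assume l': "l' \<in> {1..N-1}" "l' \<noteq> l"
      show "indicator {z l'..<z (Suc l')} x * (cum e l')\<^sup>2 = (0::real)"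
      proof (cases "l' < l")
        case True
        hence "z (Suc l') \<le> z l" by (simp add: z_le_iff)
        then show ?thesis using l1 by auto
      next
        case False
        hence "z l' \<ge> z (Suc l)" using l' by (simp add: z_le_iff)
        then show ?thesis using xSuc by auto
      qed
    qed simp
    then show ?thesis using g l1 xSuc by simp
  qed
qed

lemma cramer_eq:
  assumes e: "cum (\<lambda>i. p i - q i) N = 0"
  shows "cramer_sq z N p q = dz * Dv (\<lambda>i. p i - q i)"
proof -
  let ?e = "\<lambda>i. p i - q i"
  have gd: "gcdf z N p x - gcdf z N q x = gcdf z N ?e x" for x
    by (simp add: gcdf_def sum_subtractf[symmetric] if_distrib cong: if_cong) 
  have hb: "has_bochner_integral lborel (\<lambda>x. \<Sum>l=1..N-1. indicator {z l..<z (Suc l)} x * (cum ?e l)\<^sup>2)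
      (\<Sum>l=1..N-1. measure lborel {z l..<z (Suc l)} * (cum ?e l)\<^sup>2)"
    by (intro has_bochner_integral_sum has_bochner_integral_mult_left has_bochner_integral_real_indicator) (use dz_pos in \<open>auto simp: z_Suc emeasure_lborel_Ico\<close>)
  have "cramer_sq z N p q = integral\<^sup>L lborel (\<lambda>x. \<Sum>l=1..N-1. indicator {z l..<z (Suc l)} x * (cum ?e l)\<^sup>2)"
    unfolding cramer_sq_def gd gcdf_pt[OF e] ..
  also have "\<dots> = (\<Sum>l=1..N-1. measure lborel {z l..<z (Suc l)} * (cum ?e l)\<^sup>2)"
    using hb by (rule has_bochner_integral_integral_eq)
  also have "\<dots> = dz * Dv ?e"
    using dz_pos by (simp add: Dv_def sum_distrib_left z_Suc)
  finally show ?thesis .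
qed

end


lemma cum_cong: "(\<And>i. i \<in> {1..n} \<Longrightarrow> f i = g i) \<Longrightarrow> cum f n = cum g n"
  by (simp add: cum_def)

lemma (in gs) Dv_cong: "(\<And>i. i \<in> {1..N} \<Longrightarrow> f i = g i) \<Longrightarrow> Dv f = Dv g"
  unfolding Dv_def by (intro sum.cong refl arg_cong[where f="\<lambda>x. x\<^sup>2"] cum_cong) auto

theorem corollary2:
  fixes C :: "'s::finite \<Rightarrow> 'a::finite \<Rightarrow> real"
    and P :: "'s \<Rightarrow> 'a \<Rightarrow> 's \<Rightarrow> real"
    and pol :: "'s \<Rightarrow> 'a \<Rightarrow> real"
    and \<gamma> zmin zmax u \<kappa> :: real
    and N k j :: nat
    and \<eta>0 \<eta>inf :: "'s \<times> 'a \<Rightarrow> nat \<Rightarrow> real"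
    and s :: 's
  defines "z \<equiv> grid zmin zmax N"
  defines "T \<equiv> proj_bellman z N C P pol \<gamma>"
  defines "\<delta>0 \<equiv> (SUP sa. cramer_sq z N (\<eta>0 sa) (\<eta>inf sa))"
  defines "Finf \<equiv> cum (state_law pol \<eta>inf s)"
  defines "Fk \<equiv> cum (state_law pol ((T ^^ k) \<eta>0) s)"
  assumes N: "N \<ge> 2" and zrange: "zmin < zmax"
    and gamma: "0 < \<gamma>" "\<gamma> < 1"
    and P_nonneg: "\<And>s a s'. P s a s' \<ge> 0" and P_sum: "\<And>s a. (\<Sum>s'\<in>UNIV. P s a s') = 1"
    and pol_nonneg: "\<And>s a. pol s a \<ge> 0" and pol_sum: "\<And>s. (\<Sum>a\<in>UNIV. pol s a) = 1"
    and init: "\<And>sa. is_gdist N (\<eta>0 sa)"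
    and inf_gdist: "\<And>sa. is_gdist N (\<eta>inf sa)"
    and inf_fix: "\<And>sa i. i \<in> {1..N} \<Longrightarrow> T \<eta>inf sa i = \<eta>inf sa i"
    and u: "0 < u" "u < 1"
    and j: "j \<in> {1..N}" "Finf (j - 1) < u" "u < Finf j"
    and kappa: "\<delta>0 = 0 \<or> \<kappa> > ln (real N * \<delta>0 / ((min (Finf j - u) (u - Finf (j - 1)))\<^sup>2 * (zmax - zmin)))
                                 / (real N * ln (1 / \<gamma>))"
    and k: "real k \<ge> \<kappa> * real N"
  shows "Fk (j - 1) < u \<and> u < Fk j"
proof -
  interpret gs zmin zmax N using N zrange by unfold_locales
  have zg: "z = grid zmin zmax N" by (simp add: z_def)
  define e where "e k' sa i = (T ^^ k') \<eta>0 sa i - \<eta>inf sa i" for k' sa i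
  have e_step: "e (Suc k') sa i = T (e k') sa i" if "i \<in> {1..N}" for k' sa i
  proof -
    have "e (Suc k') sa i = T ((T ^^ k') \<eta>0) sa i - T \<eta>inf sa i"
      using inf_fix[OF that] by (simp add: e_def)
    also have "\<dots> = T (e k') sa i"
      by (simp only: T_def zg T_diff e_def[abs_def])
    finally show ?thesis .
  qed
  define M0 where "M0 = \<delta>0 / dz"
  have finU: "finite (UNIV :: ('s \<times> 'a) set)" by simp
  have e0c: "cum (e 0 sa) N = 0" for sa
    using init[of sa] inf_gdist[of sa]
    by (simp add: e_def cum_def is_gdist_def sum_subtractf)
  have e0D: "Dv (e 0 sa) \<le> M0" for sa
  proof -
    have ee: "e 0 sa = (\<lambda>i. \<eta>0 sa i - \<eta>inf sa i)" by (simp add: e_def[abs_def])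
    have "dz * Dv (e 0 sa) = cramer_sq z N (\<eta>0 sa) (\<eta>inf sa)"
      using cramer_eq[of "\<eta>0 sa" "\<eta>inf sa"] e0c[of sa] unfolding ee zg by simp
    also have "\<dots> \<le> \<delta>0" unfolding \<delta>0_def
      by (rule cSUP_upper) (auto intro: bdd_above_finite)
    finally show ?thesis using dz_pos by (simp add: M0_def field_simps)
  qed
  have M0_nonneg: "M0 \<ge> 0" using e0D[of undefined] Dv_nonneg[of "e 0 undefined"] by linarith
  have iter: "\<forall>sa. cum (e k' sa) N = 0 \<and> Dv (e k' sa) \<le> \<gamma> ^ k' * M0" for k'
  proof (induction k')
    case 0 then show ?case using e0c e0D by simp
  next
    case (Suc k')
    show ?case
    proof
      fix sa
      have cf: "cum (T (e k') sa) N = 0 \<and> Dv (T (e k') sa) \<le> \<gamma> * (\<gamma> ^ k' * M0)"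
        unfolding T_def zg
        by (rule contract_family) (use gamma P_nonneg P_sum pol_nonneg pol_sum Suc.IH in auto)
      have "cum (e (Suc k') sa) N = cum (T (e k') sa) N" by (rule cum_cong) (simp add: e_step)
      moreover have "Dv (e (Suc k') sa) = Dv (T (e k') sa)" by (rule Dv_cong) (simp add: e_step)
      ultimately show "cum (e (Suc k') sa) N = 0 \<and> Dv (e (Suc k') sa) \<le> \<gamma> ^ Suc k' * M0"
        using cf by (simp add: mult.assoc)
    qed
  qed
  have diff: "Fk m - Finf m = (\<Sum>a\<in>UNIV. pol s a * cum (e k (s,a)) m)" for m
    unfolding Fk_def Finf_def cum_def state_law_def e_def
    by (simp add: sum_subtractf[symmetric] right_diff_distrib sum_distrib_left sum.swap[of _ "{Suc 0..m}"])
  have bound: "(Fk m - Finf m)\<^sup>2 \<le> \<gamma> ^ k * M0" if m: "m \<le> N" for m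
  proof -
    have cb: "(cum (e k (s,a)) m)\<^sup>2 \<le> \<gamma> ^ k * M0" for a
    proof (cases "m \<in> {1..N-1}")
      case True
      have "(cum (e k (s,a)) m)\<^sup>2 \<le> Dv (e k (s,a))"
        unfolding Dv_def by (rule member_le_sum[OF True]) auto
      then show ?thesis using iter[of k] by (meson order_trans)
    next
      case False
      hence "m = 0 \<or> m = N" using m by auto
      hence "cum (e k (s,a)) m = 0" using iter[of k] by (auto simp: cum_def)
      then show ?thesis using M0_nonneg gamma by simp
    qed
    have "(Fk m - Finf m)\<^sup>2 \<le> (\<Sum>a\<in>UNIV. pol s a) * (\<Sum>a\<in>UNIV. pol s a * (cum (e k (s,a)) m)\<^sup>2)"
      unfolding diff by (rule CS_weighted) (simp add: pol_nonneg)
    also have "\<dots> \<le> (\<Sum>a\<in>UNIV. pol s a * (\<gamma> ^ k * M0))"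
      unfolding pol_sum mult_1_left by (rule sum_mono, rule mult_left_mono[OF cb]) (simp add: pol_nonneg)
    also have "\<dots> = \<gamma> ^ k * M0" by (simp add: sum_distrib_right[symmetric] pol_sum)
    finally show ?thesis .
  qed
  define \<epsilon> where "\<epsilon> = min (Finf j - u) (u - Finf (j - 1))"
  have eps: "\<epsilon> > 0" using j by (simp add: \<epsilon>_def)
  have small: "\<gamma> ^ k * M0 < \<epsilon>\<^sup>2"
  proof (cases "\<delta>0 = 0")
    case True then show ?thesis using eps by (simp add: M0_def)
  next
    case False
    have "\<delta>0 \<ge> 0" using M0_nonneg dz_pos by (simp add: M0_def zero_le_divide_iff)
    hence d0: "\<delta>0 > 0" using False by simp
    define L where "L = zmax - zmin"
    have L: "L > 0" using zrange by (simp add: L_def)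
    define A where "A = real N * \<delta>0 / (\<epsilon>\<^sup>2 * L)"
    have A: "A > 0" using d0 L eps N by (simp add: A_def)
    have lg: "ln (1 / \<gamma>) > 0" using gamma by simp
    have NP: "real N * ln (1 / \<gamma>) > 0" using lg N by simp
    have kap: "\<kappa> > ln A / (real N * ln (1 / \<gamma>))"
      using kappa False by (simp add: A_def \<epsilon>_def L_def)
    hence "\<kappa> * (real N * ln (1 / \<gamma>)) > ln A" using NP by (simp add: field_simps)
    moreover have "real k * ln (1 / \<gamma>) \<ge> \<kappa> * real N * ln (1 / \<gamma>)"
      using k lg by (simp add: mult_right_mono)
    ultimately have "real k * ln (1 / \<gamma>) > ln A" by (simp add: mult.assoc)
    hence "ln (\<gamma> ^ k) < ln (1 / A)"
      using gamma A by (simp add: ln_realpow ln_div)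
    hence gk: "\<gamma> ^ k < 1 / A" using gamma A by (simp add: ln_less_cancel_iff)
    hence "\<gamma> ^ k * A < 1" using A by (simp add: field_simps)
    hence "\<gamma> ^ k * (real N * \<delta>0 / L) < \<epsilon>\<^sup>2" using eps L by (simp add: A_def field_simps)
    moreover have "M0 \<le> real N * \<delta>0 / L"
    proof -
      have "M0 = (real N - 1) * \<delta>0 / L" using N by (simp add: M0_def dz_def L_def)
      also have "\<dots> \<le> real N * \<delta>0 / L" using d0 L by (simp add: divide_right_mono)
      finally show ?thesis .
    qed
    ultimately show ?thesis
      using mult_left_mono[of M0 "real N * \<delta>0 / L" "\<gamma> ^ k"] gamma
      by (meson le_less_trans less_imp_le zero_le_power)
  qed
  have close: "\<bar>Fk m - Finf m\<bar> < \<epsilon>" if "m \<le> N" for m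
  proof -
    have "\<bar>Fk m - Finf m\<bar>\<^sup>2 < \<epsilon>\<^sup>2" using bound[OF that] small by simp
    thus ?thesis using eps power2_less_imp_less[of "\<bar>Fk m - Finf m\<bar>" \<epsilon>] by simp
  qed
  have jN: "j \<le> N" "j - 1 \<le> N" using j(1) by auto
  have c1: "\<bar>Fk (j-1) - Finf (j-1)\<bar> < \<epsilon>" by (rule close[OF jN(2)])
  have c2: "\<bar>Fk j - Finf j\<bar> < \<epsilon>" by (rule close[OF jN(1)])
  have e1: "\<epsilon> \<le> Finf j - u" "\<epsilon> \<le> u - Finf (j - 1)" by (simp_all add: \<epsilon>_def)
  from c1 c2 e1 show ?thesis by (simp only: abs_less_iff) linarith
qed


end
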